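(* Let $U$ be an $n\times n$ unitary matrix and let $b$ be a positive integer smaller than $n/2$. Let $I=\{(j,k): j,k=1,\dots,n,\ |j-k|\le b\text{ or }n-|j-k|\le b\}$ and let $U^{(band)}$ be the $n\times n$ matrix with entries $U^{(band)}_{jk}=U_{jk}$ for $(j,k)\in I$ and $U^{(band)}_{jk}=0$ otherwise. Then there exist positive constants $C_1,C_2$, independent of $n$ and $b$, such that $$\|U^{(band)}\|\le C_1\ln b+C_2.$$
   Context: $\|\cdot\|$ denotes the operator norm. *)

theory Defs
  imports Complex_Main
begin

(* An n x n complex matrix is represented as a function nat => nat => complex;
   only the entries with indices in {0..<n} are relevant (indices shifted from 1..n to 0..n-1). *)

definition unitary_mat :: "nat \<Rightarrow> (nat \<Rightarrow> nat \<Rightarrow> complex) \<Rightarrow> bool" where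
  "unitary_mat n U \<longleftrightarrow>
     (\<forall>j<n. \<forall>k<n. (\<Sum>i<n. cnj (U i j) * U i k) = (if j = k then 1 else 0)) \<and>
     (\<forall>j<n. \<forall>k<n. (\<Sum>i<n. U j i * cnj (U k i)) = (if j = k then 1 else 0))"

definition op_norm :: "nat \<Rightarrow> (nat \<Rightarrow> nat \<Rightarrow> complex) \<Rightarrow> real" where
  "op_norm n A = Sup {sqrt (\<Sum>j<n. (cmod (\<Sum>k<n. A j k * x k))\<^sup>2) | x :: nat \<Rightarrow> complex.
                        (\<Sum>k<n. (cmod (x k))\<^sup>2) \<le> 1}"

definition band :: "nat \<Rightarrow> nat \<Rightarrow> (nat \<Rightarrow> nat \<Rightarrow> complex) \<Rightarrow> (nat \<Rightarrow> nat \<Rightarrow> complex)" where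
  "band n b U = (\<lambda>j k. if \<bar>int j - int k\<bar> \<le> int b \<or> int n - \<bar>int j - int k\<bar> \<le> int b
                        then U j k else 0)"

end

theory Submission
  imports Defs "HOL-Analysis.L2_Norm" "HOL-Analysis.Complex_Transcendental"
begin


definition ee :: "nat \<Rightarrow> real \<Rightarrow> complex" where "ee n x = cis (2*pi*x / real n)"

lemma ee_mult: "ee n x * ee n y = ee n (x + y)"
  by (simp add: ee_def cis_mult add_divide_distrib distrib_left)

lemma norm_ee[simp]: "cmod (ee n x) = 1" by (simp add: ee_def)

lemma ee_pow: "ee n x ^ t = ee n (real t * x)"
  unfolding ee_def Complex.DeMoivre by (simp add: mult_ac)

lemma roots_sum:
  assumes n: "n > 0"
  shows "(\<Sum>t<n. ee n (real t * of_int m)) = (if int n dvd m then of_nat n else 0)"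
proof -
  have eq: "(\<Sum>t<n. ee n (real t * of_int m)) = (\<Sum>t<n. (ee n (of_int m)) ^ t)"
    by (simp add: ee_pow)
  show ?thesis
  proof (cases "int n dvd m")
    case True
    then obtain q where q: "m = int n * q" by blast
    have "ee n (of_int m) = 1" using n cis_multiple_2pi[of "of_int q"] by (simp add: ee_def q mult.assoc)
    then show ?thesis using True eq by simp
  next
    case False
    have z1: "ee n (of_int m) \<noteq> 1"
    proof
      assume "ee n (of_int m) = 1"
      then have "cos (2*pi* of_int m / real n) = 1" unfolding ee_def
        by (metis cis.sel(1) one_complex.sel(1))
      then obtain q :: int where "2*pi* of_int m / real n = of_int q * 2 * pi"
        using cos_one_2pi_int by blast
      then have "real_of_int m = of_int q * real n" using n by (simp add: field_simps)
      then have "m = q * int n" by (metis of_int_eq_iff of_int_mult of_int_of_nat_eq)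
      then show False using False by simp
    qed
    have "ee n (of_int m) ^ n = ee n (real n * of_int m)" by (rule ee_pow)
    also have "\<dots> = cis (2*pi* of_int m)" using n by (simp add: ee_def mult.assoc del: cis_multiple_2pi)
    also have "\<dots> = 1" by (metis cis_multiple_2pi Ints_of_int)
    finally have zn: "ee n (of_int m) ^ n = 1" .
    show ?thesis using False eq geometric_sum[OF z1, of n] zn by simp
  qed
qed



lemma dvd3:
  fixes m :: int
  assumes "int n dvd m" "\<bar>m\<bar> < 2 * int n"
  shows "m = 0 \<or> m = int n \<or> m = - int n"
proof -
  obtain q where q: "m = int n * q" using assms(1) by blast
  have "n > 0" using assms(2) by auto
  have "\<bar>q\<bar> < 2"
  proof (rule ccontr)
    assume "\<not> \<bar>q\<bar> < 2"
    then have "int n * 2 \<le> int n * \<bar>q\<bar>" by (intro mult_left_mono) auto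
    then show False using assms(2) by (simp add: q abs_mult)
  qed
  then have "q = 0 \<or> q = 1 \<or> q = -1" by auto
  then show ?thesis using q by auto
qed

lemma count_lemma:
  assumes n: "2 * b < n" and j: "j < n" and k: "k < n"
  shows "(\<Sum>i<2*b+1. if int n dvd (int j - int k - int i + int b) then 1::complex else 0)
     = (if \<bar>int j - int k\<bar> \<le> int b \<or> int n - \<bar>int j - int k\<bar> \<le> int b then 1 else 0)"
proof -
  define D where "D = int j - int k"
  have Db: "\<bar>D\<bar> < int n" using j k by (auto simp: D_def)
  have key: "int n dvd (D - int i + int b) \<longleftrightarrow> (D - int i + int b = 0 \<or> D - int i + int b = int n \<or> D - int i + int b = - int n)"
    if "i < 2*b+1" for i
  proof
    assume "int n dvd (D - int i + int b)"
    moreover have "\<bar>D - int i + int b\<bar> < 2 * int n" using that Db n by auto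
    ultimately show "D - int i + int b = 0 \<or> D - int i + int b = int n \<or> D - int i + int b = - int n"
      by (rule dvd3)
  qed auto
  show ?thesis
  proof (cases "\<bar>D\<bar> \<le> int b \<or> int n - \<bar>D\<bar> \<le> int b")
    case True
    define d0 where "d0 = (if \<bar>D\<bar> \<le> int b then D else if D \<ge> 0 then D - int n else D + int n)"
    have d0b: "- int b \<le> d0 \<and> d0 \<le> int b" using True Db n by (auto simp: d0_def)
    define i0 where "i0 = nat (d0 + int b)"
    have i0: "i0 < 2*b+1" using d0b by (auto simp: i0_def)
    have iff: "int n dvd (D - int i + int b) \<longleftrightarrow> i = i0" if "i < 2*b+1" for i
      unfolding key[OF that] using True Db n that d0b unfolding i0_def d0_def
      by (auto split: if_splits)
    have "(\<Sum>i<2*b+1. if int n dvd (int j - int k - int i + int b) then 1::complex else 0)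
        = (\<Sum>i<2*b+1. if i = i0 then 1::complex else 0)"
      by (rule sum.cong) (auto simp: iff[unfolded D_def])
    also have "\<dots> = 1" using i0 by simp
    finally show ?thesis using True by (simp add: D_def)
  next
    case False
    have no: "\<not> int n dvd (D - int i + int b)" if "i < 2*b+1" for i
      unfolding key[OF that] using False Db n that by auto
    have "(\<Sum>i<2*b+1. if int n dvd (int j - int k - int i + int b) then 1::complex else 0) = 0"
      by (rule sum.neutral) (auto simp: no[unfolded D_def])
    then show ?thesis using False by (simp add: D_def)
  qed
qed



definition cc :: "nat \<Rightarrow> nat \<Rightarrow> nat \<Rightarrow> complex" where
  "cc n b t = (\<Sum>i<2*b+1. ee n (- (real t * (real i - real b)))) / of_nat n"

lemma band_decomp:
  assumes n: "2 * b < n" and j: "j < n" and k: "k < n"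
  shows "(\<Sum>t<n. cc n b t * ee n (real t * real j) * ee n (- (real t * real k)))
     = (if \<bar>int j - int k\<bar> \<le> int b \<or> int n - \<bar>int j - int k\<bar> \<le> int b then 1 else 0)"
proof -
  have n0: "n > 0" using n by auto
  have e3: "ee n (- (real t * (real i - real b))) * ee n (real t * real j) * ee n (- (real t * real k))
      = ee n (real t * of_int (int j - int k - int i + int b))" for t i
    by (simp add: ee_mult algebra_simps)
  have "(\<Sum>t<n. cc n b t * ee n (real t * real j) * ee n (- (real t * real k)))
     = (\<Sum>t<n. \<Sum>i<2*b+1. ee n (- (real t * (real i - real b))) * ee n (real t * real j) * ee n (- (real t * real k))) / of_nat n"
    by (simp add: cc_def sum_divide_distrib sum_distrib_right del: sum.lessThan_Suc)
  also have "\<dots> = (\<Sum>i<2*b+1. \<Sum>t<n. ee n (real t * of_int (int j - int k - int i + int b))) / of_nat n"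
    by (simp add: e3 sum.swap[of _ "{..<n}"])
  also have "\<dots> = (\<Sum>i<2*b+1. if int n dvd (int j - int k - int i + int b) then of_nat n else 0) / of_nat n"
    by (intro arg_cong[where f="\<lambda>x. x / of_nat n"] sum.cong refl roots_sum[OF n0])
  also have "\<dots> = (\<Sum>i<2*b+1. if int n dvd (int j - int k - int i + int b) then 1::complex else 0)"
    unfolding sum_divide_distrib using n0 by (intro sum.cong refl) auto
  finally show ?thesis using count_lemma[OF n j k] by simp
qed



lemma opnorm_le:
  assumes K: "K \<ge> 0"
    and h: "\<And>x. L2_set (\<lambda>j. cmod (\<Sum>k<n. A j k * x k)) {..<n} \<le> K * L2_set (\<lambda>k. cmod (x k)) {..<n}"
  shows "op_norm n A \<le> K"
  unfolding op_norm_def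
proof (rule cSup_least)
  show "{sqrt (\<Sum>j<n. (cmod (\<Sum>k<n. A j k * x k))\<^sup>2) | x :: nat \<Rightarrow> complex.
                        (\<Sum>k<n. (cmod (x k))\<^sup>2) \<le> 1} \<noteq> {}"
    by (rule ccontr) (auto dest: spec[where x="\<lambda>_. 0"])
next
  fix z assume "z \<in> {sqrt (\<Sum>j<n. (cmod (\<Sum>k<n. A j k * x k))\<^sup>2) | x :: nat \<Rightarrow> complex.
                        (\<Sum>k<n. (cmod (x k))\<^sup>2) \<le> 1}"
  then obtain x where z: "z = L2_set (\<lambda>j. cmod (\<Sum>k<n. A j k * x k)) {..<n}"
    and x: "L2_set (\<lambda>k. cmod (x k)) {..<n} \<le> 1"
    by (auto simp: L2_set_def)
  have "z \<le> K * L2_set (\<lambda>k. cmod (x k)) {..<n}" using h z by simp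
  also have "\<dots> \<le> K * 1" using x K by (intro mult_left_mono) auto
  finally show "z \<le> K" by simp
qed

lemma unitary_iso:
  assumes U: "unitary_mat n U"
  shows "L2_set (\<lambda>j. cmod (\<Sum>k<n. U j k * y k)) {..<n} = L2_set (\<lambda>k. cmod (y k)) {..<n}"
proof -
  have orth: "\<And>l k. l < n \<Longrightarrow> k < n \<Longrightarrow> (\<Sum>j<n. cnj (U j l) * U j k) = (if l = k then 1 else 0)"
    using U by (auto simp: unitary_mat_def)
  have "complex_of_real (\<Sum>j<n. (cmod (\<Sum>k<n. U j k * y k))\<^sup>2)
      = (\<Sum>j<n. (\<Sum>k<n. U j k * y k) * cnj (\<Sum>l<n. U j l * y l))"
    by (simp only: of_real_sum complex_norm_square)
  also have "\<dots> = (\<Sum>j<n. \<Sum>k<n. \<Sum>l<n. (y k * cnj (y l)) * (cnj (U j l) * U j k))"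
    by (intro sum.cong refl) (simp add: sum_product cnj_sum mult_ac)
  also have "\<dots> = (\<Sum>k<n. \<Sum>j<n. \<Sum>l<n. (y k * cnj (y l)) * (cnj (U j l) * U j k))"
    by (rule sum.swap)
  also have "\<dots> = (\<Sum>k<n. \<Sum>l<n. \<Sum>j<n. (y k * cnj (y l)) * (cnj (U j l) * U j k))"
    by (rule sum.cong[OF refl], rule sum.swap)
  also have "\<dots> = (\<Sum>k<n. \<Sum>l<n. (y k * cnj (y l)) * (\<Sum>j<n. cnj (U j l) * U j k))"
    by (simp only: sum_distrib_left)
  also have "\<dots> = (\<Sum>k<n. \<Sum>l<n. (y k * cnj (y l)) * (if l = k then 1 else 0))"
    by (intro sum.cong refl) (simp add: orth)
  also have "\<dots> = (\<Sum>k<n. y k * cnj (y k))"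
    by (simp add: if_distrib cong: if_cong)
  also have "\<dots> = complex_of_real (\<Sum>k<n. (cmod (y k))\<^sup>2)"
    by (simp only: of_real_sum complex_norm_square)
  finally have "(\<Sum>j<n. (cmod (\<Sum>k<n. U j k * y k))\<^sup>2) = (\<Sum>k<n. (cmod (y k))\<^sup>2)"
    using of_real_eq_iff by blast
  then show ?thesis by (simp add: L2_set_def)
qed

lemma tri_sum:
  assumes "finite T"
  shows "L2_set (\<lambda>j. cmod (\<Sum>t\<in>T. v t j)) A \<le> (\<Sum>t\<in>T. L2_set (\<lambda>j. cmod (v t j)) A)"
  using assms
proof (induction T rule: finite_induct)
  case empty
  then show ?case by (simp add: L2_set_def)
next
  case (insert x F)
  have "L2_set (\<lambda>j. cmod (\<Sum>t\<in>insert x F. v t j)) A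
      = L2_set (\<lambda>j. cmod (v x j + (\<Sum>t\<in>F. v t j))) A"
    using insert by simp
  also have "\<dots> \<le> L2_set (\<lambda>j. cmod (v x j) + cmod (\<Sum>t\<in>F. v t j)) A"
    by (rule L2_set_mono) (auto intro: norm_triangle_ineq)
  also have "\<dots> \<le> L2_set (\<lambda>j. cmod (v x j)) A + L2_set (\<lambda>j. cmod (\<Sum>t\<in>F. v t j)) A"
    by (rule L2_set_triangle_ineq)
  also have "\<dots> \<le> L2_set (\<lambda>j. cmod (v x j)) A + (\<Sum>t\<in>F. L2_set (\<lambda>j. cmod (v t j)) A)"
    using insert by simp
  also have "\<dots> = (\<Sum>t\<in>insert x F. L2_set (\<lambda>j. cmod (v t j)) A)"
    using insert by simp
  finally show ?case .
qed

lemma band_bound: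
  assumes U: "unitary_mat n U" and n: "2 * b < n"
  shows "L2_set (\<lambda>j. cmod (\<Sum>k<n. band n b U j k * x k)) {..<n}
      \<le> (\<Sum>t<n. cmod (cc n b t)) * L2_set (\<lambda>k. cmod (x k)) {..<n}"
proof -
  define y where "y t k = ee n (- (real t * real k)) * x k" for t k
  have vy: "L2_set (\<lambda>k. cmod (y t k)) {..<n} = L2_set (\<lambda>k. cmod (x k)) {..<n}" for t
    by (simp add: y_def norm_mult)
  have row: "(\<Sum>k<n. band n b U j k * x k) =
      (\<Sum>t<n. (cc n b t * ee n (real t * real j)) * (\<Sum>k<n. U j k * y t k))" if j: "j < n" for j
  proof -
    have "(\<Sum>k<n. band n b U j k * x k)
        = (\<Sum>k<n. (\<Sum>t<n. cc n b t * ee n (real t * real j) * ee n (- (real t * real k))) * U j k * x k)"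
      by (intro sum.cong refl) (simp add: band_def band_decomp[OF n j])
    also have "\<dots> = (\<Sum>k<n. \<Sum>t<n. (cc n b t * ee n (real t * real j)) * (U j k * y t k))"
      by (rule sum.cong[OF refl]) (simp add: sum_distrib_left sum_distrib_right y_def mult_ac)
    also have "\<dots> = (\<Sum>t<n. \<Sum>k<n. (cc n b t * ee n (real t * real j)) * (U j k * y t k))"
      by (rule sum.swap)
    also have "\<dots> = (\<Sum>t<n. (cc n b t * ee n (real t * real j)) * (\<Sum>k<n. U j k * y t k))"
      by (simp only: sum_distrib_left)
    finally show ?thesis .
  qed
  have "L2_set (\<lambda>j. cmod (\<Sum>k<n. band n b U j k * x k)) {..<n}
      = L2_set (\<lambda>j. cmod (\<Sum>t<n. (cc n b t * ee n (real t * real j)) * (\<Sum>k<n. U j k * y t k))) {..<n}"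
    by (rule L2_set_cong) (auto simp: row)
  also have "\<dots> \<le> (\<Sum>t<n. L2_set (\<lambda>j. cmod ((cc n b t * ee n (real t * real j)) * (\<Sum>k<n. U j k * y t k))) {..<n})"
    by (rule tri_sum) simp
  also have "\<dots> = (\<Sum>t<n. cmod (cc n b t) * L2_set (\<lambda>j. cmod (\<Sum>k<n. U j k * y t k)) {..<n})"
    by (intro sum.cong refl) (simp add: norm_mult L2_set_right_distrib)
  also have "\<dots> = (\<Sum>t<n. cmod (cc n b t) * L2_set (\<lambda>k. cmod (x k)) {..<n})"
    by (simp add: unitary_iso[OF U] vy)
  also have "\<dots> = (\<Sum>t<n. cmod (cc n b t)) * L2_set (\<lambda>k. cmod (x k)) {..<n}"
    by (simp add: sum_distrib_right)
  finally show ?thesis .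
qed



lemma sin_ge_third: fixes x :: real assumes "0 \<le> x" "x \<le> 2" shows "x / 3 \<le> sin x"
proof -
  have "\<bar>sin x - (\<Sum>m<3. sin_coeff m * x ^ m)\<bar> \<le> inverse (fact 3) * \<bar>x\<bar> ^ 3"
    by (rule Maclaurin_sin_bound)
  moreover have "(\<Sum>m<3. sin_coeff m * x ^ m) = x"
    by (simp add: sin_coeff_def numeral_3_eq_3)
  ultimately have "x - x^3/6 \<le> sin x" using assms by (simp add: fact_numeral abs_if split: if_splits)
  moreover have "x^3 \<le> 4 * x"
  proof -
    have "x^2 \<le> 2^2" using assms by (intro power_mono) auto
    then have "x * x^2 \<le> x * 4" using assms by (intro mult_left_mono) auto
    then show ?thesis by (simp add: power3_eq_cube power2_eq_square mult_ac)
  qed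
  ultimately show ?thesis by simp
qed

lemma cmod_cis_minus_1: "cmod (cis \<phi> - 1) = 2 * \<bar>sin (\<phi>/2)\<bar>"
proof -
  have "cis \<phi> - 1 = cis (\<phi>/2) * (cis (\<phi>/2) - cis (-(\<phi>/2)))"
    by (simp add: right_diff_distrib cis_mult)
  also have "cis (\<phi>/2) - cis (-(\<phi>/2)) = \<i> * complex_of_real (2 * sin (\<phi>/2))"
    by (simp add: complex_eq_iff)
  finally show ?thesis by (simp add: norm_mult)
qed



lemma cc_le1: assumes "n > 0" shows "cmod (cc n b t) \<le> (2*real b+1) / real n"
proof -
  have "cmod (\<Sum>i<2*b+1. ee n (- (real t * (real i - real b)))) \<le> (\<Sum>i<2*b+1. cmod (ee n (- (real t * (real i - real b)))))"
    by (rule norm_sum)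
  also have "\<dots> = 2*real b+1" by simp
  finally show ?thesis using assms by (simp add: cc_def norm_divide divide_right_mono)
qed

lemma sin_lower: assumes "0 < t" "t < n"
  shows "sin (pi * real t / real n) \<ge> real t / real n \<or> sin (pi * real t / real n) \<ge> real (n - t) / real n"
proof -
  have n: "real n > 0" using assms by auto
  have gen: "real s / real n \<le> sin (pi * real s / real n)" if "2 * s \<le> n" for s
  proof -
    have x0: "0 \<le> pi * real s / real n" using n by simp
    have "pi * real s / real n \<le> pi / 2"
      using that n by (simp add: field_simps)
    then have x2: "pi * real s / real n \<le> 2" using pi_less_4 by linarith
    have "real s / real n \<le> (pi * real s / real n) / 3"
    proof -
      have "3 * real s \<le> pi * real s" by (rule mult_right_mono) (use pi_gt3 in auto)
      then show ?thesis using n by (simp add: field_simps)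
    qed
    also have "\<dots> \<le> sin (pi * real s / real n)" by (rule sin_ge_third[OF x0 x2])
    finally show ?thesis .
  qed
  show ?thesis
  proof (cases "2 * t \<le> n")
    case True then show ?thesis using gen by blast
  next
    case False
    have "sin (pi * real t / real n) = sin (pi - pi * real t / real n)" by simp
    also have "pi - pi * real t / real n = pi * real (n - t) / real n"
      using assms n by (simp add: of_nat_diff field_simps)
    finally show ?thesis using gen[of "n - t"] False by auto
  qed
qed

lemma cc_le2: assumes t: "0 < t" "t < n"
  shows "cmod (cc n b t) \<le> 1 / real t + 1 / real (n - t)"
proof -
  have n: "real n > 0" using t by auto
  define w where "w = ee n (- real t)"
  have trm: "ee n (- (real t * (real i - real b))) = ee n (real t * real b) * w ^ i" for i
    by (simp add: w_def ee_pow ee_mult algebra_simps)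
  have S: "(\<Sum>i<2*b+1. ee n (- (real t * (real i - real b)))) = ee n (real t * real b) * (\<Sum>i<2*b+1. w ^ i)"
    by (simp add: trm sum_distrib_left del: sum.lessThan_Suc)
  have sinpos: "sin (pi * real t / real n) > 0"
    using t n by (intro sin_gt_zero) (auto simp: field_simps)
  have w1: "cmod (w - 1) = 2 * sin (pi * real t / real n)"
  proof -
    have "cmod (w - 1) = 2 * \<bar>sin (2 * pi * (- real t) / real n / 2)\<bar>"
      by (simp add: w_def ee_def cmod_cis_minus_1)
    also have "sin (2 * pi * (- real t) / real n / 2) = - sin (pi * real t / real n)"
      by (simp add: field_simps)
    finally show ?thesis using sinpos by simp
  qed
  have wne: "w \<noteq> 1" using w1 sinpos by auto
  have "cmod (\<Sum>i<2*b+1. w ^ i) = cmod ((w ^ (2*b+1) - 1) / (w - 1))"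
    by (simp only: geometric_sum[OF wne])
  also have "\<dots> = cmod (w ^ (2*b+1) - 1) / cmod (w - 1)" by (simp add: norm_divide)
  also have "\<dots> \<le> 2 / cmod (w - 1)"
  proof (rule divide_right_mono)
    have "cmod (w ^ (2*b+1) - 1) \<le> cmod (w ^ (2*b+1)) + cmod (1::complex)" by (rule norm_triangle_ineq4)
    also have "\<dots> = 2" by (simp add: w_def norm_power norm_mult)
    finally show "cmod (w ^ (2*b+1) - 1) \<le> 2" .
  qed simp
  finally have bS: "cmod (\<Sum>i<2*b+1. w ^ i) \<le> 1 / sin (pi * real t / real n)"
    using w1 by simp
  have "cmod (cc n b t) = cmod (\<Sum>i<2*b+1. w ^ i) / real n"
    unfolding cc_def S by (simp add: norm_divide norm_mult)
  also have "\<dots> \<le> (1 / sin (pi * real t / real n)) / real n"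
    using bS n by (intro divide_right_mono) auto
  also have "\<dots> \<le> 1 / real t + 1 / real (n - t)"
  proof -
    have nt: "real (n - t) > 0" using t by simp
    have "(1 / sin (pi * real t / real n)) / real n \<le> 1 / real t \<or> (1 / sin (pi * real t / real n)) / real n \<le> 1 / real (n - t)"
    proof (cases "sin (pi * real t / real n) \<ge> real t / real n")
      case True
      then have "real t \<le> real n * sin (pi * real t / real n)" using n by (simp add: field_simps)
      then show ?thesis using sinpos n t by (simp add: field_simps)
    next
      case False
      then have "sin (pi * real t / real n) \<ge> real (n - t) / real n" using sin_lower[OF t] by blast
      then have "real (n - t) \<le> real n * sin (pi * real t / real n)" using n by (simp add: field_simps)
      then show ?thesis using sinpos n nt by (simp add: field_simps)
    qed
    moreover have "1 / real t \<ge> 0" "1 / real (n - t) \<ge> 0" by auto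
    ultimately show ?thesis by (smt (verit))
  qed
  finally show ?thesis .
qed



lemma harm_tail:
  assumes "T \<le> N" "1 \<le> T"
  shows "(\<Sum>t\<in>{T<..N}. 1 / real t) \<le> ln (real N) - ln (real T)"
  using assms
proof (induction N rule: dec_induct)
  case base
  then show ?case by simp
next
  case (step N)
  have N0: "real N > 0" using step by simp
  have "{T<..Suc N} = insert (Suc N) {T<..N}" using step by auto
  then have "(\<Sum>t\<in>{T<..Suc N}. 1 / real t) = 1 / real (Suc N) + (\<Sum>t\<in>{T<..N}. 1 / real t)"
    by simp
  also have "\<dots> \<le> 1 / real (Suc N) + (ln (real N) - ln (real T))" using step by simp
  also have "\<dots> \<le> ln (real (Suc N)) - ln (real T)"
  proof -
    have "ln (real N / real (Suc N)) \<le> real N / real (Suc N) - 1"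
      using N0 by (intro ln_le_minus_one) simp
    also have "real N / real (Suc N) - 1 = - (1 / real (Suc N))" by (simp add: field_simps)
    finally have "ln (real N) - ln (real (Suc N)) \<le> - (1 / real (Suc N))"
      using N0 by (simp add: ln_div)
    then show ?thesis by simp
  qed
  finally show ?case .
qed

lemma sum_min:
  assumes b: "0 < b" and n: "2 * b < n"
  shows "(\<Sum>t\<in>{1..<n}. min ((2*real b+1) / real n) (1 / real t)) \<le> 1 + ln 6 + ln (real b)"
proof -
  define A where "A = (2*real b+1) / real n"
  define T where "T = n div (2*b+1)"
  have T1: "1 \<le> T"
  proof -
    have "0 < n div (2*b+1)" using n by (subst div_greater_zero_iff) auto
    then show ?thesis by (simp add: T_def)
  qed
  have Tn: "T * (2*b+1) \<le> n" unfolding T_def by (rule div_times_less_eq_dividend)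
  have nlt: "n < 2 * T * (2*b+1)"
  proof -
    have "n = T * (2*b+1) + n mod (2*b+1)" unfolding T_def by (rule div_mult_mod_eq[symmetric])
    moreover have "n mod (2*b+1) < 2*b+1" by simp
    moreover have "2*b+1 \<le> T * (2*b+1)" using T1 by (metis mult_1 mult_le_mono1)
    ultimately show ?thesis by linarith
  qed
  have TltN: "T \<le> n - 1" using Tn b by (cases T) auto
  have split: "{1..<n} = {1..T} \<union> {T<..n-1}" using TltN n by auto
  have disj: "{1..T} \<inter> {T<..n-1} = {}" by auto
  have "(\<Sum>t\<in>{1..<n}. min A (1 / real t)) = (\<Sum>t\<in>{1..T}. min A (1 / real t)) + (\<Sum>t\<in>{T<..n-1}. min A (1 / real t))"
    unfolding split by (rule sum.union_disjoint) (auto simp: disj)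
  also have "\<dots> \<le> (\<Sum>t\<in>{1..T}. A) + (\<Sum>t\<in>{T<..n-1}. 1 / real t)"
    by (intro add_mono sum_mono) auto
  also have "(\<Sum>t\<in>{1..T}. A) = real T * A" by simp
  also have "real T * A \<le> 1"
  proof -
    have "real T * (2*real b+1) \<le> real n" using Tn by (metis of_nat_le_iff of_nat_mult of_nat_add of_nat_1 of_nat_mult mult_2 of_nat_add)
    then show ?thesis using n by (simp add: A_def field_simps)
  qed
  also have "(\<Sum>t\<in>{T<..n-1}. 1 / real t) \<le> ln (real (n-1)) - ln (real T)"
    by (rule harm_tail[OF TltN T1])
  also have "\<dots> \<le> ln (real n) - ln (real T)"
  proof -
    have "ln (real (n-1)) \<le> ln (real n)" using TltN T1 by (subst ln_le_cancel_iff) auto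
    then show ?thesis by simp
  qed
  also have "\<dots> \<le> ln 6 + ln (real b)"
  proof -
    have "real n \<le> 6 * real b * real T"
    proof -
      have "real n < 2 * real T * (2*real b+1)" using nlt
        by (metis (mono_tags, opaque_lifting) of_nat_less_iff of_nat_mult of_nat_add of_nat_1 of_nat_numeral mult_2)
      also have "\<dots> \<le> 6 * real b * real T"
      proof -
        have "real T * 1 \<le> real T * real b" using b by (intro mult_left_mono) auto
        then show ?thesis by (simp add: algebra_simps)
      qed
      finally show ?thesis by simp
    qed
    then have "ln (real n) \<le> ln (6 * real b * real T)" using n b T1 by (subst ln_le_cancel_iff) auto
    also have "\<dots> = ln 6 + ln (real b) + ln (real T)" using b T1 by (simp add: ln_mult)
    finally show ?thesis by simp
  qed
  finally show ?thesis by (simp add: A_def)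
qed



lemma coef_sum:
  assumes b: "0 < b" and n: "2 * b < n"
  shows "(\<Sum>t<n. cmod (cc n b t)) \<le> 2 * ln (real b) + 13"
proof -
  define A where "A = (2*real b+1) / real n"
  have n0: "n > 0" using n by simp
  have A1: "A \<le> 1" using n by (simp add: A_def)
  have A0: "A \<ge> 0" by (simp add: A_def)
  have split: "{..<n} = insert 0 {1..<n}" using n0 by auto
  have "(\<Sum>t<n. cmod (cc n b t)) = cmod (cc n b 0) + (\<Sum>t\<in>{1..<n}. cmod (cc n b t))"
    unfolding split by (subst sum.insert) auto
  also have "\<dots> \<le> A + (\<Sum>t\<in>{1..<n}. min A (1 / real t) + min A (1 / real (n - t)))"
  proof (intro add_mono sum_mono)
    show "cmod (cc n b 0) \<le> A" unfolding A_def by (rule cc_le1[OF n0])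
  next
    fix t assume t: "t \<in> {1..<n}"
    have c1: "cmod (cc n b t) \<le> A" unfolding A_def by (rule cc_le1[OF n0])
    have c2: "cmod (cc n b t) \<le> 1 / real t + 1 / real (n - t)" using t by (intro cc_le2) auto
    have p: "1 / real t \<ge> 0" "1 / real (n - t) \<ge> 0" by auto
    show "cmod (cc n b t) \<le> min A (1 / real t) + min A (1 / real (n - t))"
      using c1 c2 p A0 by (smt (verit))
  qed
  also have "(\<Sum>t\<in>{1..<n}. min A (1 / real t) + min A (1 / real (n - t)))
      = (\<Sum>t\<in>{1..<n}. min A (1 / real t)) + (\<Sum>t\<in>{1..<n}. min A (1 / real (n - t)))"
    by (rule sum.distrib)
  also have "(\<Sum>t\<in>{1..<n}. min A (1 / real (n - t))) = (\<Sum>t\<in>{1..<n}. min A (1 / real t))"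
    by (rule sum.reindex_bij_witness[of _ "\<lambda>t. n - t" "\<lambda>t. n - t"]) auto
  also have "(\<Sum>t\<in>{1..<n}. min A (1 / real t)) \<le> 1 + ln 6 + ln (real b)"
    unfolding A_def by (rule sum_min[OF b n])
  finally have "(\<Sum>t<n. cmod (cc n b t)) \<le> A + 2 * (1 + ln 6 + ln (real b))" by simp
  moreover have "ln (6::real) \<le> 5" using ln_le_minus_one[of 6] by simp
  ultimately show ?thesis using A1 by simp
qed

theorem lemma4p2:
  shows "\<exists>C1 C2 :: real. C1 > 0 \<and> C2 > 0 \<and>
     (\<forall>(n::nat) (b::nat) (U :: nat \<Rightarrow> nat \<Rightarrow> complex).
        unitary_mat n U \<longrightarrow> 0 < b \<longrightarrow> 2 * b < n \<longrightarrow>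
        op_norm n (band n b U) \<le> C1 * ln (real b) + C2)"
proof -
  have "op_norm n (band n b U) \<le> 2 * ln (real b) + 13"
    if U: "unitary_mat n U" and b: "0 < b" and n: "2 * b < n" for n b :: nat and U
  proof -
    have "op_norm n (band n b U) \<le> (\<Sum>t<n. cmod (cc n b t))"
      by (rule opnorm_le) (auto intro: sum_nonneg band_bound[OF U n])
    also have "\<dots> \<le> 2 * ln (real b) + 13" by (rule coef_sum[OF b n])
    finally show ?thesis .
  qed
  then show ?thesis by (intro exI[of _ 2] exI[of _ 13]) auto
qed

end
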